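(* Let $\boldsymbol{\Xi} = \begin{bmatrix}\boldsymbol{\alpha}_1 & \boldsymbol{\alpha}_2 & \boldsymbol{\alpha}_3\\ \boldsymbol{\beta}_1 & \boldsymbol{\beta}_2 & \boldsymbol{\beta}_3\end{bmatrix}\in\mathbb{R}^{6\times 3}$ (with $\boldsymbol{\alpha}_j,\boldsymbol{\beta}_j\in\mathbb{R}^3$) satisfy $\Vert\boldsymbol{\alpha}_1\Vert\neq 0$ and $\boldsymbol{\alpha}_1\times\boldsymbol{\alpha}_2\neq\boldsymbol{0}$, and let $\boldsymbol{\Xi}=\boldsymbol{S}\boldsymbol{U}$ be its unique $SU$-decomposition, with $\boldsymbol{S}=\begin{bmatrix}\boldsymbol{R} & \boldsymbol{0}\\ [\boldsymbol{p}]_\times\boldsymbol{R} & \boldsymbol{R}\end{bmatrix}$ and $\boldsymbol{R}=[\boldsymbol{r}_1\ \boldsymbol{r}_2\ \boldsymbol{r}_3]$. Then: (1) $\boldsymbol{r}_1$ is parallel to the screw axis of $\boldsymbol{\xi}_1=(\boldsymbol{\alpha}_1;\boldsymbol{\beta}_1)$; (2) $\boldsymbol{r}_3$ is parallel to the common normal of the screw axes of $\boldsymbol{\xi}_1$ and $\boldsymbol{\xi}_2=(\boldsymbol{\alpha}_2;\boldsymbol{\beta}_2)$; (3) $\boldsymbol{p}$ lies on the screw axis of $\boldsymbol{\xi}_1$; (4) $\boldsymbol{p}$ is the intersection point of the screw axis of $\boldsymbol{\xi}_1$ with the common normal of the screw axes of $\boldsymbol{\xi}_1$ and $\boldsymb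ol{\xi}_2$.
   Context: For $\boldsymbol{a}\in\mathbb{R}^3$, $[\boldsymbol{a}]_\times$ denotes the skew-symmetric matrix with $[\boldsymbol{a}]_\times\boldsymbol{b}=\boldsymbol{a}\times\boldsymbol{b}$. A screw-transformation matrix is a $6\times6$ matrix $\begin{bmatrix}\boldsymbol{R} & \boldsymbol{0}\\ [\boldsymbol{p}]_\times\boldsymbol{R} & \boldsymbol{R}\end{bmatrix}$ with $\boldsymbol{R}\in SO(3)$, $\boldsymbol{p}\in\mathbb{R}^3$. An $SU$-decomposition of $\boldsymbol{\Xi}$ is a factorization $\boldsymbol{\Xi}=\boldsymbol{S}\boldsymbol{U}$ with $\boldsymbol{S}$ a screw-transformation matrix and $\boldsymbol{U}=\begin{bmatrix}\boldsymbol{U}_1\\ \boldsymbol{U}_2\end{bmatrix}$, where $\boldsymbol{U}_1,\boldsymbol{U}_2$ are $3\times3$ upper-triangular with $(\boldsymbol{U}_1)_{11}>0$, $(\boldsymbol{U}_1)_{22}>0$; it exists and is unique under the stated conditions. For a screw $\boldsymbol{\xi}=(\boldsymbol{\alpha};\boldsymbol{\beta})\in\mathbb{R}^6$ with $\boldsymbol{\alpha}\neq\boldsymbol{0}$, its screw axis is the line $\{\boldsymbol{p}_\perp + t\,\boldsymbol{e} : t\in\mathbb{R}\}$ in $\mathbb{R}^3$, where $\boldsymbol{e}=\boldsymbol{\alpha}/\Vert\boldsymbol{\alpha}\Vert$ and $\boldsymbol{p}_\perp = (\boldsymbol{\alpha}\times\boldsymbol{\beta})/\Vert\boldsymbol{\alpha}\Vert^2$.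 The common normal of two non-parallel lines is the unique line that intersects both lines perpendicularly. *)

theory Defs
  imports "HOL-Analysis.Analysis"
begin

text \<open>Skew-symmetric matrix: skew a *v b = a x b (its j-th column is a x e_j).\<close>
definition skew :: "real^3 \<Rightarrow> real^3^3" where
  "skew a = (\<chi> i j. (cross3 a (axis j 1)) $ i)"

type_synonym line3 = "(real^3, real^3) prod"

definition on_line :: "real^3 \<Rightarrow> line3 \<Rightarrow> bool" where
  "on_line x L \<longleftrightarrow> (\<exists>t::real. x = fst L + t *\<^sub>R snd L)"

definition screw_axis :: "real^3 \<Rightarrow> real^3 \<Rightarrow> line3" where
  "screw_axis \<alpha> \<beta> = ((1 / (norm \<alpha>)\<^sup>2) *\<^sub>R cross3 \<alpha> \<beta>, (1 / norm \<alpha>) *\<^sub>R \<alpha>)"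

definition is_common_normal :: "line3 \<Rightarrow> line3 \<Rightarrow> line3 \<Rightarrow> bool" where
  "is_common_normal L1 L2 N \<longleftrightarrow>
     snd N \<noteq> 0 \<and>
     (\<exists>x. on_line x L1 \<and> on_line x N) \<and>
     (\<exists>y. on_line y L2 \<and> on_line y N) \<and>
     snd N \<bullet> snd L1 = 0 \<and> snd N \<bullet> snd L2 = 0"

definition parallel :: "real^3 \<Rightarrow> real^3 \<Rightarrow> bool" where
  "parallel u v \<longleftrightarrow> u \<noteq> 0 \<and> v \<noteq> 0 \<and> (\<exists>c::real. u = c *\<^sub>R v)"

text \<open>SU-decomposition of Xi = [A; B] (A = [alpha_1 alpha_2 alpha_3], B = [beta_1 beta_2 beta_3]):
  Xi = S U with S = [R 0; [p]x R  R], R in SO(3), U = [U1; U2], U1, U2 upper triangular,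
  (U1)_11 > 0, (U1)_22 > 0.  The block product S U is written out blockwise.\<close>
definition upper_triangular3 :: "real^3^3 \<Rightarrow> bool" where
  "upper_triangular3 U \<longleftrightarrow> U $ 2 $ 1 = 0 \<and> U $ 3 $ 1 = 0 \<and> U $ 3 $ 2 = 0"

definition is_SU_decomposition ::
  "real^3^3 \<Rightarrow> real^3^3 \<Rightarrow> real^3^3 \<Rightarrow> real^3 \<Rightarrow> real^3^3 \<Rightarrow> real^3^3 \<Rightarrow> bool" where
  "is_SU_decomposition A B R p U1 U2 \<longleftrightarrow>
     rotation_matrix R \<and> upper_triangular3 U1 \<and> upper_triangular3 U2 \<and>
     U1 $ 1 $ 1 > 0 \<and> U1 $ 2 $ 2 > 0 \<and>
     A = R ** U1 \<and> B = (skew p ** R) ** U1 + R ** U2"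

end

theory Submission
  imports Defs
begin

lemma col_mult3: "column j (M ** (U::real^3^3)) = U$1$j *\<^sub>R column 1 M + U$2$j *\<^sub>R column 2 M + U$3$j *\<^sub>R column 3 M"
  by (simp add: vec_eq_iff column_def matrix_matrix_mult_def sum_3 algebra_simps)

lemma col_mult_gen: "column j (M ** (U::real^3^3)) = M *v column j U"
  by (simp add: vec_eq_iff column_def matrix_matrix_mult_def matrix_vector_mult_def)

lemma skew_mult: "skew a *v b = cross3 a b"
  by (simp add: skew_def cross3_simps matrix_vector_mult_def axis_def)

lemma basis_exp:
  assumes "orthogonal_matrix (R::real^3^3)"
  shows "w = (column 1 R \<bullet> w) *\<^sub>R column 1 R + (column 2 R \<bullet> w) *\<^sub>R column 2 R + (column 3 R \<bullet> w) *\<^sub>R column 3 R"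
proof -
  have "R ** transpose R = mat 1" using assms by (simp add: orthogonal_matrix_def)
  then have "w = R *v (transpose R *v w)" by (metis matrix_vector_mul_assoc matrix_vector_mul_lid)
  also have "\<dots> = ((transpose R *v w)$1) *\<^sub>R column 1 R + ((transpose R *v w)$2) *\<^sub>R column 2 R + ((transpose R *v w)$3) *\<^sub>R column 3 R"
    by (simp add: matrix_mult_sum sum_3 scalar_mult_eq_scaleR)
  finally have e: "w = ((transpose R *v w)$1) *\<^sub>R column 1 R + ((transpose R *v w)$2) *\<^sub>R column 2 R + ((transpose R *v w)$3) *\<^sub>R column 3 R" .
  have kk: "(transpose R *v w)$k = column k R \<bullet> w" for k
    by (simp add: matrix_vector_mult_def transpose_def column_def inner_vec_def)
  show ?thesis using e unfolding kk .
qed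

lemma orth_facts:
  assumes "orthogonal_matrix (R::real^3^3)"
  shows "column i R \<bullet> column i R = 1" "i \<noteq> j \<Longrightarrow> column i R \<bullet> column j R = 0"
  using assms unfolding orthogonal_matrix_orthonormal_columns orthogonal_def
  by (auto simp: norm_eq_1)

lemma triple: "cross3 a (cross3 b c) = (a \<bullet> c) *\<^sub>R b - (a \<bullet> b) *\<^sub>R c"
  by (simp add: cross3_simps forall_3)

lemma column_add: "column j (X + Y) = column j X + column j (Y::real^3^3)"
  by (simp add: vec_eq_iff column_def)

theorem mainTheorem3:
  fixes A B R U1 U2 :: "real^3^3" and p :: "real^3"
  assumes "norm (column 1 A) \<noteq> 0"
    and "cross3 (column 1 A) (column 2 A) \<noteq> 0"
    and "is_SU_decomposition A B R p U1 U2"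
  shows "parallel (column 1 R) (snd (screw_axis (column 1 A) (column 1 B)))
    \<and> (\<exists>N. is_common_normal (screw_axis (column 1 A) (column 1 B))
                             (screw_axis (column 2 A) (column 2 B)) N)
    \<and> (\<forall>N. is_common_normal (screw_axis (column 1 A) (column 1 B))
                             (screw_axis (column 2 A) (column 2 B)) N
           \<longrightarrow> parallel (column 3 R) (snd N))
    \<and> on_line p (screw_axis (column 1 A) (column 1 B))
    \<and> (\<forall>N. is_common_normal (screw_axis (column 1 A) (column 1 B))
                             (screw_axis (column 2 A) (column 2 B)) N
           \<longrightarrow> {x. on_line x (screw_axis (column 1 A) (column 1 B)) \<and> on_line x N} = {p})"
proof -
  define r1 where "r1 = column 1 R"
  define r2 where "r2 = column 2 R"
  define r3 where "r3 = column 3 R"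
  define a where "a = U1$1$1"
  define a12 where "a12 = U1$1$2"
  define a22 where "a22 = U1$2$2"
  define b11 where "b11 = U2$1$1"
  define b12 where "b12 = U2$1$2"
  define b22 where "b22 = U2$2$2"
  have rot: "rotation_matrix R" and ut1: "upper_triangular3 U1" and ut2: "upper_triangular3 U2"
    and apos: "a > 0" and a22pos: "a22 > 0" and hA: "A = R ** U1"
    and hB: "B = (skew p ** R) ** U1 + R ** U2"
    using assms(3) unfolding is_SU_decomposition_def a_def a22_def by auto
  have orth: "orthogonal_matrix R" using rot by (simp add: rotation_matrix_def)
  have o11: "r1 \<bullet> r1 = 1" and o22: "r2 \<bullet> r2 = 1" and o33: "r3 \<bullet> r3 = 1"
    using orth_facts[OF orth] unfolding r1_def r2_def r3_def by auto
  have o12: "r1 \<bullet> r2 = 0" and o21: "r2 \<bullet> r1 = 0" and o13: "r1 \<bullet> r3 = 0"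
    and o31: "r3 \<bullet> r1 = 0" and o23: "r2 \<bullet> r3 = 0" and o32: "r3 \<bullet> r2 = 0"
    using orth_facts(2)[OF orth] unfolding r1_def r2_def r3_def by auto
  have bexp: "w = (r1 \<bullet> w) *\<^sub>R r1 + (r2 \<bullet> w) *\<^sub>R r2 + (r3 \<bullet> w) *\<^sub>R r3" for w
    using basis_exp[OF orth] unfolding r1_def r2_def r3_def .
  define \<alpha>1 where "\<alpha>1 = column 1 A"
  define \<alpha>2 where "\<alpha>2 = column 2 A"
  define \<beta>1 where "\<beta>1 = column 1 B"
  define \<beta>2 where "\<beta>2 = column 2 B"
  have h\<alpha>1: "\<alpha>1 = a *\<^sub>R r1"
    using ut1 unfolding \<alpha>1_def hA col_mult3 upper_triangular3_def a_def r1_def by simp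
  have h\<alpha>2: "\<alpha>2 = a12 *\<^sub>R r1 + a22 *\<^sub>R r2"
    using ut1 unfolding \<alpha>2_def hA col_mult3 upper_triangular3_def a12_def a22_def r1_def r2_def by simp
  have colS: "column j ((skew p ** R) ** U1) = cross3 p (column j A)" for j
    unfolding hA col_mult_gen matrix_vector_mul_assoc[symmetric] skew_mult ..
  have cB: "column j B = cross3 p (column j A) + column j (R ** U2)" for j
    unfolding hB column_add colS ..
  have h\<beta>1: "\<beta>1 = cross3 p \<alpha>1 + b11 *\<^sub>R r1"
    using ut2 unfolding \<beta>1_def \<alpha>1_def cB col_mult3 upper_triangular3_def b11_def r1_def
    by simp
  have h\<beta>2: "\<beta>2 = cross3 p \<alpha>2 + b12 *\<^sub>R r1 + b22 *\<^sub>R r2"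
    using ut2 unfolding \<beta>2_def \<alpha>2_def cB col_mult3 upper_triangular3_def b12_def b22_def r1_def r2_def
    by (simp add: algebra_simps)
  have nr1: "norm r1 = 1" using o11 by (simp add: norm_eq_1)
  have na1: "norm \<alpha>1 = a" using apos nr1 h\<alpha>1 by simp
  have r3nz: "r3 \<noteq> 0" using o33 by auto
  have c1: "cross3 \<alpha>1 \<beta>1 = a\<^sup>2 *\<^sub>R (p - (r1 \<bullet> p) *\<^sub>R r1)"
    by (simp add: h\<alpha>1 h\<beta>1 cross_add_right cross_mult_left cross_mult_right triple o11
         power2_eq_square inner_commute algebra_simps)
  have L1: "screw_axis \<alpha>1 \<beta>1 = (p - (r1 \<bullet> p) *\<^sub>R r1, r1)"
    using apos unfolding screw_axis_def c1 na1 by (simp add: h\<alpha>1)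
  have r2a2: "r2 \<bullet> \<alpha>2 = a22" and r1a2: "r1 \<bullet> \<alpha>2 = a12" and r3a2: "r3 \<bullet> \<alpha>2 = 0"
    by (simp_all add: h\<alpha>2 inner_add_right o11 o12 o21 o22 o31 o32 o13 o23)
  define n2 where "n2 = norm \<alpha>2"
  have a2nz: "\<alpha>2 \<noteq> 0" using r2a2 a22pos by auto
  have n2pos: "n2 > 0" using a2nz n2_def by simp
  have a2a2: "\<alpha>2 \<bullet> \<alpha>2 = n2\<^sup>2" unfolding n2_def by (simp add: power2_norm_eq_inner)
  define v3 where "v3 = cross3 r1 r2"
  define k where "k = a12 * b22 - a22 * b12"
  have w0: "cross3 \<alpha>2 (b12 *\<^sub>R r1 + b22 *\<^sub>R r2) = k *\<^sub>R v3"
    using cross_skew[of r2 r1]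
    by (simp add: h\<alpha>2 k_def v3_def cross_add_left cross_add_right cross_mult_left cross_mult_right algebra_simps)
  have v3e: "v3 = (r3 \<bullet> v3) *\<^sub>R r3"
    using bexp[of v3] unfolding v3_def by (simp add: dot_cross_self)
  define \<mu> where "\<mu> = - (\<alpha>2 \<bullet> p) / n2\<^sup>2"
  define \<nu> where "\<nu> = k * (r3 \<bullet> v3) / n2\<^sup>2"
  have c2: "cross3 \<alpha>2 \<beta>2 = n2\<^sup>2 *\<^sub>R p - (\<alpha>2 \<bullet> p) *\<^sub>R \<alpha>2 + (k * (r3 \<bullet> v3)) *\<^sub>R r3"
  proof -
    have "cross3 \<alpha>2 \<beta>2 = cross3 \<alpha>2 (cross3 p \<alpha>2) + cross3 \<alpha>2 (b12 *\<^sub>R r1 + b22 *\<^sub>R r2)"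
      by (simp add: h\<beta>2 cross_add_right add.assoc)
    also have "\<dots> = n2\<^sup>2 *\<^sub>R p - (\<alpha>2 \<bullet> p) *\<^sub>R \<alpha>2 + (k * (r3 \<bullet> v3)) *\<^sub>R r3"
      unfolding w0 triple a2a2 using v3e by (metis scaleR_scaleR)
    finally show ?thesis .
  qed
  have L2: "screw_axis \<alpha>2 \<beta>2 = (p + \<mu> *\<^sub>R \<alpha>2 + \<nu> *\<^sub>R r3, (1/n2) *\<^sub>R \<alpha>2)"
    using n2pos unfolding screw_axis_def c2 n2_def[symmetric] \<mu>_def \<nu>_def
    by (simp add: algebra_simps scaleR_diff_right divide_inverse)
  have dot_a2: "d \<bullet> ((1/n2) *\<^sub>R \<alpha>2) = 0 \<Longrightarrow> d \<bullet> r1 = 0 \<Longrightarrow> d \<bullet> r2 = 0" for d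
    using n2pos a22pos by (simp add: h\<alpha>2 inner_add_right inner_commute)
  have dirN: "d = (r3 \<bullet> d) *\<^sub>R r3" if "d \<bullet> ((1/n2) *\<^sub>R \<alpha>2) = 0" "d \<bullet> r1 = 0" for d
    using bexp[of d] dot_a2[OF that] that(2) by (simp add: inner_commute)
  let ?L1 = "(p - (r1 \<bullet> p) *\<^sub>R r1, r1)"
  let ?L2 = "(p + \<mu> *\<^sub>R \<alpha>2 + \<nu> *\<^sub>R r3, (1/n2) *\<^sub>R \<alpha>2)"
  have P1: "parallel r1 r1" unfolding parallel_def using nr1 by (auto intro: exI[of _ 1])
  have P4: "on_line p ?L1" unfolding on_line_def by (auto intro!: exI[of _ "r1 \<bullet> p"])
  have P2: "is_common_normal ?L1 ?L2 (p, r3)"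
    unfolding is_common_normal_def
  proof (intro conjI)
    show "snd (p, r3) \<noteq> 0" using r3nz by simp
    show "\<exists>x. on_line x ?L1 \<and> on_line x (p, r3)"
    proof (intro exI conjI)
      show "on_line p ?L1" by (rule P4)
      show "on_line p (p, r3)" unfolding on_line_def by (auto intro!: exI[of _ 0])
    qed
    show "\<exists>y. on_line y ?L2 \<and> on_line y (p, r3)"
      apply (rule exI[of _ "p + \<nu> *\<^sub>R r3"])
      unfolding on_line_def
    proof (intro conjI)
      show "\<exists>t. p + \<nu> *\<^sub>R r3 = fst ?L2 + t *\<^sub>R snd ?L2"
        using n2pos by (intro exI[of _ "- \<mu> * n2"]) (simp add: algebra_simps)
      show "\<exists>t. p + \<nu> *\<^sub>R r3 = fst (p, r3) + t *\<^sub>R snd (p, r3)"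
        by (intro exI[of _ "\<nu>"]) simp
    qed
    show "snd (p, r3) \<bullet> snd ?L1 = 0" using o31 by simp
    show "snd (p, r3) \<bullet> snd ?L2 = 0" using r3a2 by simp
  qed
  have P3: "parallel r3 (snd N)" if "is_common_normal ?L1 ?L2 N" for N
  proof -
    obtain q d where N: "N = (q, d)" by (cases N)
    have dnz: "d \<noteq> 0" and d1: "d \<bullet> r1 = 0" and d2: "d \<bullet> ((1/n2) *\<^sub>R \<alpha>2) = 0"
      using that unfolding is_common_normal_def N by auto
    have de: "d = (r3 \<bullet> d) *\<^sub>R r3" using dirN[OF d2 d1] .
    define c where "c = r3 \<bullet> d"
    have de': "d = c *\<^sub>R r3" using de unfolding c_def .
    have cnz: "c \<noteq> 0" using dnz de' by auto
    have "r3 = (1 / c) *\<^sub>R d" unfolding de' using cnz by simp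
    then show ?thesis unfolding parallel_def N using r3nz dnz by auto
  qed
  have P5: "{x. on_line x ?L1 \<and> on_line x N} = {p}" if "is_common_normal ?L1 ?L2 N" for N
  proof -
    obtain q d where N: "N = (q, d)" by (cases N)
    have dnz: "d \<noteq> 0" and d1: "d \<bullet> r1 = 0" and d2: "d \<bullet> ((1/n2) *\<^sub>R \<alpha>2) = 0"
      and ex1: "\<exists>x. on_line x ?L1 \<and> on_line x (q, d)"
      and ex2: "\<exists>y. on_line y ?L2 \<and> on_line y (q, d)"
      using that unfolding is_common_normal_def N by auto
    define c where "c = r3 \<bullet> d"
    have de': "d = c *\<^sub>R r3" using dirN[OF d2 d1] unfolding c_def .
    obtain x0 where x0: "on_line x0 ?L1" "on_line x0 (q, d)" using ex1 by blast
    obtain s where x0a: "x0 = p - (r1 \<bullet> p) *\<^sub>R r1 + s *\<^sub>R r1" using x0(1) unfolding on_line_def by auto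
    obtain t1 where x0b: "x0 = q + t1 *\<^sub>R d" using x0(2) unfolding on_line_def by auto
    obtain y0 where y0: "on_line y0 ?L2" "on_line y0 (q, d)" using ex2 by blast
    obtain u where y0a: "y0 = p + \<mu> *\<^sub>R \<alpha>2 + \<nu> *\<^sub>R r3 + u *\<^sub>R ((1/n2) *\<^sub>R \<alpha>2)" using y0(1) unfolding on_line_def by auto
    obtain t2 where y0b: "y0 = q + t2 *\<^sub>R d" using y0(2) unfolding on_line_def by auto
    define m where "m = \<mu> + u / n2"
    have E: "m *\<^sub>R \<alpha>2 + \<nu> *\<^sub>R r3 + ((r1 \<bullet> p) - s) *\<^sub>R r1 = ((t2 - t1) * c) *\<^sub>R r3"
    proof -
      have "y0 - x0 = (t2 - t1) *\<^sub>R d" using x0b y0b by (simp add: algebra_simps)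
      moreover have "y0 - x0 = m *\<^sub>R \<alpha>2 + \<nu> *\<^sub>R r3 + ((r1 \<bullet> p) - s) *\<^sub>R r1"
        using x0a y0a unfolding m_def by (simp add: algebra_simps)
      ultimately show ?thesis unfolding de' by simp
    qed
    have "r2 \<bullet> (m *\<^sub>R \<alpha>2 + \<nu> *\<^sub>R r3 + ((r1 \<bullet> p) - s) *\<^sub>R r1) = r2 \<bullet> (((t2 - t1) * c) *\<^sub>R r3)"
      using E by simp
    then have "m * a22 = 0" by (simp add: inner_add_right r2a2 o23 o21)
    then have m0: "m = 0" using a22pos by simp
    have "r1 \<bullet> (m *\<^sub>R \<alpha>2 + \<nu> *\<^sub>R r3 + ((r1 \<bullet> p) - s) *\<^sub>R r1) = r1 \<bullet> (((t2 - t1) * c) *\<^sub>R r3)"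
      using E by simp
    then have "s = r1 \<bullet> p" by (simp add: inner_add_right r1a2 o13 o11 m0)
    then have x0p: "x0 = p" using x0a by simp
    have "x = p" if hx: "on_line x ?L1" "on_line x N" for x
    proof -
      obtain s' where xa: "x = p - (r1 \<bullet> p) *\<^sub>R r1 + s' *\<^sub>R r1"
        using hx(1) unfolding on_line_def by auto
      obtain t where xb: "x = q + t *\<^sub>R d"
        using hx(2) unfolding on_line_def N by auto
      have "(s' - r1 \<bullet> p) *\<^sub>R r1 = (t - t1) *\<^sub>R d"
      proof -
        have "x - x0 = (t - t1) *\<^sub>R d" using xb x0b by (simp add: algebra_simps)
        moreover have "x - x0 = (s' - r1 \<bullet> p) *\<^sub>R r1" using xa x0p by (simp add: algebra_simps)
        ultimately show ?thesis by simp
      qed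
      then have "r1 \<bullet> ((s' - r1 \<bullet> p) *\<^sub>R r1) = r1 \<bullet> ((t - t1) *\<^sub>R d)" by simp
      then have "s' = r1 \<bullet> p" using d1 by (simp add: o11 inner_commute)
      then show ?thesis using xa by simp
    qed
    moreover have "on_line p ?L1 \<and> on_line p N" using P4 x0b x0p unfolding N on_line_def by auto
    ultimately show ?thesis by auto
  qed
  show ?thesis
    unfolding \<alpha>1_def[symmetric] \<alpha>2_def[symmetric] \<beta>1_def[symmetric] \<beta>2_def[symmetric] L1 L2
      r1_def[symmetric] r3_def[symmetric]
    using P1 P2 P3 P4 P5 by auto
qed

end
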